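(* Let $m\ge 1$ be an integer, let $a_0\ge 0$, $a>0$, $b>0$, $C_0>0$, $L\ge 0$, $M>0$, and put $$\bar\Gamma=\{(x,Y):\ x\in[a_0,a_0+a],\ Y\in\mathbb{R}^m,\ |Y|_2\le b+C_0\}.$$ Let $\mathcal F$ be a class of functions $f:\bar\Gamma\to\mathbb{R}$ such that every $f\in\mathcal F$ is continuous on $\bar\Gamma$, satisfies $\max_{(x,Y)\in\bar\Gamma}|f(x,Y)|\le M$, and satisfies the Lipschitz condition $|f(x,Y)-f(x,\tilde Y)|\le L|Y-\tilde Y|_2$ for all $(x,Y),(x,\tilde Y)\in\bar\Gamma$. Let $\alpha=\min\{a,b/M\}$. Consider the ODE $$y^{(m)}(x)=f\big(x,y(x),y'(x),\dots,y^{(m-1)}(x)\big),\qquad (y(a_0),y'(a_0),\dots,y^{(m-1)}(a_0))=Y_0,$$ and assume that for every $f\in\mathcal F$ and every $Y_0\in\mathbb{R}^m$ with $|Y_0|_2\le C_0$ it has a solution on $[a_0,a_0+\alpha]$ with $(x,Y(x))\in\bar\Gamma$ for all $x\in[a_0,a_0+\alpha]$, where $Y(x)=(y(x),y'(x),\dots,y^{(m-1)}(x))$. Let $\mathcal Y_0$ be the class of all such solutions $y$ on $[a_0,a_0+\alpha]$ (with $f$ ranging over $\mathcal F$ and $Y_0$ over $\{|Y_0|_2\le C_0\}$), and for $0\le k\le m-1$ let $\mathcal Y_k=\{y^{(k)}:y\in\mathcal Y_0\}$. Define $$L_{\max}=\sup_{x\in[a_0,a_0+\alpha]}\Big\{\exp\big(x\sqrt{L^2+1}\big)\Big[1+\int_0^x\exp\big(-s\sqrt{L^2+1}\big)ds\Big]\Big\}.$$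 Then for every $\delta>0$ and every $k\in\{0,\dots,m-1\}$, $$\log N_\infty(\delta,\mathcal Y_k)\le \log N_\infty\Big(\frac{\delta}{L_{\max}},\mathcal F\Big)+m\log\Big(\frac{2C_0L_{\max}}{\delta}+1\Big),$$ where $N_\infty(\cdot,\mathcal F)$ is taken with respect to the supremum metric on $\bar\Gamma$ and $N_\infty(\cdot,\mathcal Y_k)$ with respect to the supremum metric on $[a_0,a_0+\alpha]$.
   Context: Covering number: for a set $\mathbb T$ with metric $\rho$, a set $\{t^1,\dots,t^N\}\subset\mathbb T$ is a $\delta$-cover if every $t\in\mathbb T$ has some $i$ with $\rho(t,t^i)\le\delta$; $N_\rho(\delta;\mathbb T)$ is the smallest cardinality of a $\delta$-cover. $N_\infty$ denotes the covering number with respect to the supremum metric $|f-g|_\infty=\sup|f-g|$ over the relevant domain. $|\cdot|_2$ is the Euclidean norm. *)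

theory Defs
  imports "HOL-Analysis.Analysis"
begin

text \<open>Vectors of R^m are represented as functions nat => real that vanish at indices >= m.\<close>

definition in_Rm :: "nat \<Rightarrow> (nat \<Rightarrow> real) \<Rightarrow> bool" where
  "in_Rm m Y \<longleftrightarrow> (\<forall>i\<ge>m. Y i = 0)"

definition vnorm :: "nat \<Rightarrow> (nat \<Rightarrow> real) \<Rightarrow> real" where
  "vnorm m Y = sqrt (\<Sum>i<m. (Y i)^2)"

definition Gamma_bar :: "nat \<Rightarrow> real \<Rightarrow> real \<Rightarrow> real \<Rightarrow> real \<Rightarrow> (real \<times> (nat \<Rightarrow> real)) set" where
  "Gamma_bar m a0 a b C0 = {(x, Y). x \<in> {a0..a0+a} \<and> in_Rm m Y \<and> vnorm m Y \<le> b + C0}"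

definition vec_of :: "nat \<Rightarrow> (nat \<Rightarrow> real \<Rightarrow> real) \<Rightarrow> real \<Rightarrow> (nat \<Rightarrow> real)" where
  "vec_of m D x = (\<lambda>i. if i < m then D i x else 0)"

text \<open>D is the family of derivatives y = D 0, y' = D 1, ..., y^(m) = D m of a solution on
  the interval I = [a0, a0+al] of y^(m)(x) = f(x, Y(x)), Y(a0) = Y0; derivatives at the
  endpoints are one-sided (taken within I).\<close>
definition is_solution ::
  "nat \<Rightarrow> (real \<times> (nat \<Rightarrow> real) \<Rightarrow> real) \<Rightarrow> (nat \<Rightarrow> real) \<Rightarrow> real \<Rightarrow> real \<Rightarrow> (nat \<Rightarrow> real \<Rightarrow> real) \<Rightarrow> bool" where
  "is_solution m f Y0 a0 al D \<longleftrightarrow>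
     (\<forall>k<m. \<forall>x\<in>{a0..a0+al}. (D k has_real_derivative D (Suc k) x) (at x within {a0..a0+al})) \<and>
     (\<forall>x\<in>{a0..a0+al}. D m x = f (x, vec_of m D x)) \<and>
     (\<forall>k<m. D k a0 = Y0 k)"

text \<open>Covering number w.r.t. the supremum metric over the domain S (infinity if no finite cover).\<close>
definition covnum :: "real \<Rightarrow> ('a \<Rightarrow> real) set \<Rightarrow> 'a set \<Rightarrow> enat" where
  "covnum \<delta> T S =
     (INF C \<in> {C. finite C \<and> C \<subseteq> T \<and> (\<forall>t\<in>T. \<exists>c\<in>C. (SUP x\<in>S. ereal \<bar>t x - c x\<bar>) \<le> ereal \<delta>)}.
        enat (card C))"

definition Lmax :: "real \<Rightarrow> real \<Rightarrow> real \<Rightarrow> real" where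
  "Lmax L a0 al = (SUP x\<in>{a0..a0+al}.
      exp (x * sqrt (L^2 + 1)) * (1 + integral {0..x} (\<lambda>s. exp (- s * sqrt (L^2 + 1)))))"

end

theory Submission
  imports Defs
begin

definition OB :: "nat \<Rightarrow> (nat \<Rightarrow> real) \<Rightarrow> real \<Rightarrow> (nat \<Rightarrow> real) set" where
  "OB m c \<rho> = {x \<in> space (PiM {..<m} (\<lambda>_. lborel::real measure)). (\<Sum>i<m. (x i - c i)^2) < \<rho>^2}"

interpretation pl: product_sigma_finite "\<lambda>_::nat. lborel::real measure"
  by unfold_locales

lemma OB_sets[measurable]: "OB m c \<rho> \<in> sets (PiM {..<m} (\<lambda>_. lborel::real measure))"
  unfolding OB_def by measurable

lemma lborel_affine_pre:
  fixes t \<rho> :: real assumes "\<rho> > 0" and A: "A \<in> sets borel"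
  shows "ennreal \<rho> * emeasure lborel ((\<lambda>y. t + \<rho> * y) -` A) = emeasure lborel A"
proof -
  have "emeasure lborel A = emeasure (density (distr lborel borel (\<lambda>x. t + \<rho> * x)) (\<lambda>_. ennreal \<rho>)) A"
    using lborel_real_affine[of \<rho> t] assms by simp
  also have "\<dots> = ennreal \<rho> * emeasure (distr lborel borel (\<lambda>x. t + \<rho> * x)) A"
    using A by (simp add: emeasure_density nn_integral_cmult_indicator)
  also have "\<dots> = ennreal \<rho> * emeasure lborel ((\<lambda>y. t + \<rho> * y) -` A)"
    using A by (simp add: emeasure_distr)
  finally show ?thesis by simp
qed

lemma PiM_affine:
  fixes \<rho> :: real and c :: "nat \<Rightarrow> real" and m :: nat
  assumes "\<rho> > 0"
  defines "\<mu> \<equiv> PiM {..<m} (\<lambda>_. lborel::real measure)"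
  defines "T \<equiv> (\<lambda>x. \<lambda>i\<in>{..<m}. c i + \<rho> * x i)"
  shows "density (distr \<mu> \<mu> T) (\<lambda>_. ennreal (\<rho>^m)) = \<mu>"
  unfolding \<mu>_def
proof (rule pl.PiM_eqI)
  show "finite {..<m}" by simp
  show "sets (density (distr (PiM {..<m} (\<lambda>_. lborel)) (PiM {..<m} (\<lambda>_. lborel)) T) (\<lambda>_. ennreal (\<rho> ^ m))) = sets (PiM {..<m} (\<lambda>_. lborel))"
    by simp
  have Tm: "T \<in> PiM {..<m} (\<lambda>_. lborel::real measure) \<rightarrow>\<^sub>M PiM {..<m} (\<lambda>_. lborel::real measure)"
    unfolding T_def by measurable
  fix A assume A: "\<And>i. i \<in> {..<m} \<Longrightarrow> A i \<in> sets (lborel::real measure)"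
  have box: "Pi\<^sub>E {..<m} A \<in> sets (PiM {..<m} (\<lambda>_. lborel::real measure))"
    using A by (intro sets_PiM_I_finite) auto
  have pre: "T -` Pi\<^sub>E {..<m} A \<inter> space (PiM {..<m} (\<lambda>_. lborel::real measure))
      = Pi\<^sub>E {..<m} (\<lambda>i. (\<lambda>y. c i + \<rho> * y) -` A i)"
    unfolding T_def by (auto simp: space_PiM PiE_def Pi_def extensional_def)
  have "emeasure (density (distr (PiM {..<m} (\<lambda>_. lborel)) (PiM {..<m} (\<lambda>_. lborel)) T) (\<lambda>_. ennreal (\<rho> ^ m))) (Pi\<^sub>E {..<m} A)
     = ennreal (\<rho>^m) * emeasure (distr (PiM {..<m} (\<lambda>_. lborel)) (PiM {..<m} (\<lambda>_. lborel)) T) (Pi\<^sub>E {..<m} A)"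
    using box by (simp add: emeasure_density nn_integral_cmult_indicator)
  also have "\<dots> = ennreal (\<rho>^m) * emeasure (PiM {..<m} (\<lambda>_. lborel)) (Pi\<^sub>E {..<m} (\<lambda>i. (\<lambda>y. c i + \<rho> * y) -` A i))"
    using box Tm by (simp add: emeasure_distr pre)
  also have "\<dots> = ennreal (\<rho>^m) * (\<Prod>i<m. emeasure lborel ((\<lambda>y. c i + \<rho> * y) -` A i))"
    using A by (subst pl.emeasure_PiM) (auto intro: measurable_sets_borel[OF _ A])
  also have "\<dots> = (\<Prod>i<m. ennreal \<rho> * emeasure lborel ((\<lambda>y. c i + \<rho> * y) -` A i))"
    using assms(1) by (simp add: prod.distrib ennreal_power)
  also have "\<dots> = (\<Prod>i<m. emeasure lborel (A i))"
    using A assms(1) by (intro prod.cong refl lborel_affine_pre) auto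
  finally show "emeasure (density (distr (PiM {..<m} (\<lambda>_. lborel)) (PiM {..<m} (\<lambda>_. lborel)) T) (\<lambda>_. ennreal (\<rho> ^ m))) (Pi\<^sub>E {..<m} A)
      = (\<Prod>i\<in>{..<m}. emeasure lborel (A i))" by simp
qed

lemma OB_scale:
  fixes \<rho> :: real and c :: "nat \<Rightarrow> real" and m :: nat
  assumes "\<rho> > 0"
  shows "emeasure (PiM {..<m} (\<lambda>_. lborel::real measure)) (OB m c \<rho>)
       = ennreal (\<rho>^m) * emeasure (PiM {..<m} (\<lambda>_. lborel::real measure)) (OB m (\<lambda>_. 0) 1)"
proof -
  define \<mu> where "\<mu> = PiM {..<m} (\<lambda>_. lborel::real measure)"
  define T where "T = (\<lambda>x. \<lambda>i\<in>{..<m}. c i + \<rho> * x i)"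
  have Tm: "T \<in> \<mu> \<rightarrow>\<^sub>M \<mu>"
    unfolding T_def \<mu>_def by measurable
  have D: "density (distr \<mu> \<mu> T) (\<lambda>_. ennreal (\<rho>^m)) = \<mu>"
    unfolding \<mu>_def T_def by (rule PiM_affine[OF assms])
  have pre: "T -` OB m c \<rho> \<inter> space \<mu> = OB m (\<lambda>_. 0) 1"
  proof -
    have "(\<Sum>i<m. (c i + \<rho> * x i - c i)^2) < \<rho>^2 \<longleftrightarrow> (\<Sum>i<m. (x i - 0)^2) < 1" for x
    proof -
      have "(\<Sum>i<m. (c i + \<rho> * x i - c i)^2) = \<rho>^2 * (\<Sum>i<m. (x i - 0)^2)"
        by (simp add: sum_distrib_left power_mult_distrib)
      then show ?thesis using assms by simp
    qed
    then show ?thesis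
      unfolding OB_def T_def \<mu>_def by (auto simp: space_PiM PiE_def Pi_def extensional_def)
  qed
  have "emeasure \<mu> (OB m c \<rho>) = emeasure (density (distr \<mu> \<mu> T) (\<lambda>_. ennreal (\<rho>^m))) (OB m c \<rho>)"
    by (simp add: D)
  also have "\<dots> = ennreal (\<rho>^m) * emeasure (distr \<mu> \<mu> T) (OB m c \<rho>)"
    by (simp add: emeasure_density nn_integral_cmult_indicator \<mu>_def)
  also have "\<dots> = ennreal (\<rho>^m) * emeasure \<mu> (OB m (\<lambda>_. 0) 1)"
  proof -
    have "emeasure (distr \<mu> \<mu> T) (OB m c \<rho>) = emeasure \<mu> (T -` OB m c \<rho> \<inter> space \<mu>)"
      by (rule emeasure_distr[OF Tm]) (simp add: \<mu>_def)
    then show ?thesis by (simp add: pre)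
  qed
  finally show ?thesis unfolding \<mu>_def .
qed


lemma OB_unit:
  "0 < emeasure (PiM {..<m} (\<lambda>_. lborel::real measure)) (OB m (\<lambda>_. 0) 1)
   \<and> emeasure (PiM {..<m} (\<lambda>_. lborel::real measure)) (OB m (\<lambda>_. 0) 1) < \<infinity>"
proof
  define s :: real where "s = 1 / (real m + 1)"
  have s0: "s > 0" unfolding s_def by simp
  have "Pi\<^sub>E {..<m} (\<lambda>_. {- s .. s}) \<subseteq> OB m (\<lambda>_. 0) 1"
  proof
    fix x assume x: "x \<in> Pi\<^sub>E {..<m} (\<lambda>_. {- s .. s})"
    have "(\<Sum>i<m. (x i - 0)^2) \<le> (\<Sum>i<m. s^2)"
    proof (rule sum_mono)
      fix i assume "i \<in> {..<m}"
      then have "x i \<in> {- s .. s}" using x by (intro PiE_mem[of x]) auto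
      then have "\<bar>x i\<bar> \<le> s" by (simp add: abs_le_iff)
      then have "\<bar>x i\<bar>^2 \<le> s^2" by (rule power_mono) simp
      then show "(x i - 0)^2 \<le> s^2" by simp
    qed
    also have "\<dots> = real m * s^2" by simp
    also have "\<dots> < 1"
    proof -
      have "real m * s^2 = real m / (real m + 1)^2" unfolding s_def by (simp add: power_divide)
      also have "\<dots> < 1"
      proof -
        have sq: "(real m + 1)^2 = real m * real m + 2 * real m + 1"
          by (simp add: power2_eq_square algebra_simps)
        have "real m * real m \<ge> 0" by simp
        then have "real m < (real m + 1)^2" unfolding sq by linarith
        then show ?thesis by simp
      qed
      finally show ?thesis .
    qed
    finally have "(\<Sum>i<m. (x i - 0)^2) < 1" .
    moreover have "x \<in> space (PiM {..<m} (\<lambda>_. lborel::real measure))"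
      using x unfolding space_PiM by (simp add: PiE_iff)
    ultimately show "x \<in> OB m (\<lambda>_. 0) 1" unfolding OB_def by simp
  qed
  then have "emeasure (PiM {..<m} (\<lambda>_. lborel::real measure)) (Pi\<^sub>E {..<m} (\<lambda>_. {- s .. s}))
      \<le> emeasure (PiM {..<m} (\<lambda>_. lborel::real measure)) (OB m (\<lambda>_. 0) 1)"
    by (rule emeasure_mono) (auto intro!: OB_sets sets_PiM_I_finite)
  moreover have "emeasure (PiM {..<m} (\<lambda>_. lborel::real measure)) (Pi\<^sub>E {..<m} (\<lambda>_. {- s .. s})) = (\<Prod>i<m. ennreal (2 * s))"
  proof -
    have e: "emeasure lborel {- s .. s} = ennreal (2 * s)" using s0 by simp
    show ?thesis by (subst pl.emeasure_PiM) (simp_all only: e finite_lessThan sets_lborel atLeastAtMost_borel)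
  qed
  moreover have "(\<Prod>i<m. ennreal (2 * s)) > 0"
  proof -
    have "(\<Prod>i<m. ennreal (2 * s)) = ennreal ((2 * s)^m)" using s0 by (simp add: ennreal_power)
    moreover have "(2 * s)^m > 0" using s0 by simp
    ultimately show ?thesis by simp
  qed
  ultimately show "0 < emeasure (PiM {..<m} (\<lambda>_. lborel::real measure)) (OB m (\<lambda>_. 0) 1)" by (metis order_less_le_trans)
next
  have "OB m (\<lambda>_. 0) 1 \<subseteq> Pi\<^sub>E {..<m} (\<lambda>_. {-1..1})"
  proof
    fix x assume x: "x \<in> OB m (\<lambda>_. 0) 1"
    have "\<bar>x i\<bar> \<le> 1" if i: "i < m" for i
    proof -
      have "(x i - 0)^2 \<le> (\<Sum>j<m. (x j - 0)^2)"
        by (rule member_le_sum) (use i in auto)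
      also have "\<dots> < 1" using x unfolding OB_def by auto
      finally have "(x i)^2 < 1" by simp
      then show ?thesis by (simp add: abs_square_less_1 less_imp_le)
    qed
    then show "x \<in> Pi\<^sub>E {..<m} (\<lambda>_. {-1..1})" using x unfolding OB_def by (auto simp: space_PiM PiE_iff abs_le_iff)
  qed
  then have "emeasure (PiM {..<m} (\<lambda>_. lborel::real measure)) (OB m (\<lambda>_. 0) 1)
      \<le> emeasure (PiM {..<m} (\<lambda>_. lborel::real measure)) (Pi\<^sub>E {..<m} (\<lambda>_. {-1..1}))"
    by (rule emeasure_mono) (auto intro!: OB_sets sets_PiM_I_finite)
  also have "\<dots> = (\<Prod>i<m. ennreal 2)"
    by (subst pl.emeasure_PiM) auto
  also have "\<dots> < \<infinity>" by (simp add: ennreal_prod_eq_top less_top[symmetric] power_eq_top_ennreal)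
  finally show "emeasure (PiM {..<m} (\<lambda>_. lborel::real measure)) (OB m (\<lambda>_. 0) 1) < \<infinity>" .
qed

lemma vnorm_L2: "vnorm m Y = L2_set Y {..<m}"
  by (simp add: vnorm_def L2_set_def)

lemma vnorm_tri: "vnorm m (\<lambda>i. p i - q i) \<le> vnorm m (\<lambda>i. x i - p i) + vnorm m (\<lambda>i. x i - q i)"
proof -
  have "vnorm m (\<lambda>i. p i - q i) = L2_set (\<lambda>i. (x i - q i) + (p i - x i)) {..<m}"
    by (simp add: vnorm_L2)
  also have "\<dots> \<le> L2_set (\<lambda>i. x i - q i) {..<m} + L2_set (\<lambda>i. p i - x i) {..<m}"
    by (rule L2_set_triangle_ineq)
  also have "L2_set (\<lambda>i. p i - x i) {..<m} = L2_set (\<lambda>i. x i - p i) {..<m}"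
    by (simp add: L2_set_def power2_commute)
  finally show ?thesis by (simp add: vnorm_L2)
qed

lemma vnorm_tri2: "vnorm m (\<lambda>i. x i - q i) \<le> vnorm m (\<lambda>i. x i - p i) + vnorm m (\<lambda>i. p i - q i)"
proof -
  have "vnorm m (\<lambda>i. x i - q i) = L2_set (\<lambda>i. (x i - p i) + (p i - q i)) {..<m}"
    by (simp add: vnorm_L2)
  also have "\<dots> \<le> L2_set (\<lambda>i. x i - p i) {..<m} + L2_set (\<lambda>i. p i - q i) {..<m}"
    by (rule L2_set_triangle_ineq)
  finally show ?thesis by (simp add: vnorm_L2)
qed

lemma sqrt_lt_sq: "a \<ge> 0 \<Longrightarrow> b > 0 \<Longrightarrow> a < b^2 \<longleftrightarrow> sqrt a < (b::real)"
  by (metis real_sqrt_less_iff real_sqrt_abs abs_of_pos power2_eq_square)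

lemma sep_bound:
  fixes r R :: real and P :: "(nat \<Rightarrow> real) set"
  assumes r: "r > 0" and R: "R \<ge> 0" and fin: "finite P"
    and sub: "P \<subseteq> {Y. in_Rm m Y \<and> vnorm m Y \<le> R}"
    and sep: "\<forall>p\<in>P. \<forall>q\<in>P. p \<noteq> q \<longrightarrow> vnorm m (\<lambda>i. p i - q i) > r"
  shows "real (card P) \<le> (2 * R / r + 1)^m"
proof -
  define \<mu> where "\<mu> = PiM {..<m} (\<lambda>_. lborel::real measure)"
  define h where "h = r / 2"
  have h: "h > 0" using r by (simp add: h_def)
  have inball: "vnorm m (\<lambda>i. x i - c i) < \<rho>" if "x \<in> OB m c \<rho>" "\<rho> > 0" for x c \<rho>
  proof -
    have "(\<Sum>i<m. (x i - c i)^2) < \<rho>^2" using that unfolding OB_def by auto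
    then show ?thesis unfolding vnorm_def using that(2) by (subst sqrt_lt_sq[symmetric]) (auto intro: sum_nonneg)
  qed
  have disj: "disjoint_family_on (\<lambda>p. OB m p h) P"
  proof (unfold disjoint_family_on_def, intro ballI impI)
    fix p q assume pq: "p \<in> P" "q \<in> P" "p \<noteq> q"
    show "OB m p h \<inter> OB m q h = {}"
    proof (rule ccontr)
      assume "OB m p h \<inter> OB m q h \<noteq> {}"
      then obtain x where x: "x \<in> OB m p h" "x \<in> OB m q h" by blast
      have "vnorm m (\<lambda>i. p i - q i) < h + h"
        using vnorm_tri[of m p q x] inball[OF x(1) h] inball[OF x(2) h] by linarith
      moreover have "r < vnorm m (\<lambda>i. p i - q i)" using sep pq by blast
      ultimately show False by (simp add: h_def)
    qed
  qed
  have cont: "(\<Union>p\<in>P. OB m p h) \<subseteq> OB m (\<lambda>_. 0) (R + h)"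
  proof
    fix x assume "x \<in> (\<Union>p\<in>P. OB m p h)"
    then obtain p where p: "p \<in> P" "x \<in> OB m p h" by blast
    have "vnorm m (\<lambda>i. x i - 0) \<le> vnorm m (\<lambda>i. x i - p i) + vnorm m (\<lambda>i. p i - 0)"
      by (rule vnorm_tri2)
    moreover have "vnorm m (\<lambda>i. p i - 0) \<le> R" using sub p by auto
    ultimately have "vnorm m (\<lambda>i. x i - 0) < R + h" using inball[OF p(2) h] by linarith
    then have "(\<Sum>i<m. (x i - 0)^2) < (R + h)^2"
      unfolding vnorm_def using h R by (subst sqrt_lt_sq) (auto intro: sum_nonneg)
    then show "x \<in> OB m (\<lambda>_. 0) (R + h)" using p(2) unfolding OB_def by auto
  qed
  define v where "v = enn2real (emeasure \<mu> (OB m (\<lambda>_. 0) 1))"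
  have U: "0 < emeasure \<mu> (OB m (\<lambda>_. 0) 1)" "emeasure \<mu> (OB m (\<lambda>_. 0) 1) < \<infinity>"
    using OB_unit[of m] by (auto simp: \<mu>_def)
  have V: "emeasure \<mu> (OB m (\<lambda>_. 0) 1) = ennreal v"
    unfolding v_def using U(2) by (simp add: ennreal_enn2real less_top)
  have v: "v > 0" unfolding v_def using U by (simp add: enn2real_positive_iff)
  have sc: "emeasure \<mu> (OB m c \<rho>) = ennreal (\<rho>^m * v)" if "\<rho> > 0" for c \<rho>
  proof -
    have "emeasure \<mu> (OB m c \<rho>) = ennreal (\<rho>^m) * ennreal v"
      unfolding \<mu>_def using OB_scale[OF that, of m c] V unfolding \<mu>_def by simp
    also have "\<dots> = ennreal (\<rho>^m * v)" using that v by (simp add: ennreal_mult)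
    finally show ?thesis .
  qed
  have "(\<Sum>p\<in>P. emeasure \<mu> (OB m p h)) = emeasure \<mu> (\<Union>p\<in>P. OB m p h)"
    using fin disj by (intro sum_emeasure) (auto simp: \<mu>_def)
  also have "\<dots> \<le> emeasure \<mu> (OB m (\<lambda>_. 0) (R + h))"
    using cont by (intro emeasure_mono) (auto simp: \<mu>_def)
  finally have ineq: "(\<Sum>p\<in>P. emeasure \<mu> (OB m p h)) \<le> emeasure \<mu> (OB m (\<lambda>_. 0) (R + h))" .
  have "(\<Sum>p\<in>P. emeasure \<mu> (OB m p h)) = (\<Sum>p\<in>P. ennreal (h^m * v))"
    using sc[OF h] by simp
  also have "\<dots> = of_nat (card P) * ennreal (h^m * v)" by simp
  also have "\<dots> = ennreal (real (card P) * (h^m * v))"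
    using h v by (simp add: ennreal_mult ennreal_of_nat_eq_real_of_nat)
  finally have L: "(\<Sum>p\<in>P. emeasure \<mu> (OB m p h)) = ennreal (real (card P) * (h^m * v))" .
  have Rh: "R + h > 0" using h R by simp
  have "ennreal (real (card P) * (h^m * v)) \<le> ennreal ((R + h)^m * v)"
    using ineq unfolding L sc[OF Rh] .
  then have "real (card P) * (h^m * v) \<le> (R + h)^m * v"
    using Rh v by (subst (asm) ennreal_le_iff) auto
  then have "(real (card P) * h^m) * v \<le> (R + h)^m * v" by (simp add: mult.assoc)
  then have c1: "real (card P) * h^m \<le> (R + h)^m" using v by simp
  have hm: "h^m > 0" using h by simp
  have "real (card P) \<le> (R + h)^m / h^m" using c1 hm by (simp add: le_divide_eq)
  also have "(R + h)^m / h^m = ((R + h) / h)^m" by (simp add: power_divide)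
  also have "(R + h) / h = 2 * R / r + 1" using r unfolding h_def by (simp add: field_simps)
  finally show ?thesis .
qed

lemma vnorm_sym: "vnorm m (\<lambda>i. p i - q i) = vnorm m (\<lambda>i. q i - p i)"
  by (simp add: vnorm_def power2_commute)

lemma ball_cover:
  fixes r R :: real
  assumes r: "r > 0" and R: "R \<ge> 0"
  shows "\<exists>P. finite P \<and> P \<subseteq> {Y. in_Rm m Y \<and> vnorm m Y \<le> R} \<and>
    (\<forall>Y\<in>{Y. in_Rm m Y \<and> vnorm m Y \<le> R}. \<exists>c\<in>P. vnorm m (\<lambda>i. Y i - c i) \<le> r) \<and>
    real (card P) \<le> (2 * R / r + 1)^m"
proof -
  define B where "B = {Y. in_Rm m Y \<and> vnorm m Y \<le> R}"
  define Sep where "Sep = (\<lambda>P. finite P \<and> P \<subseteq> B \<and> (\<forall>p\<in>P. \<forall>q\<in>P. p \<noteq> q \<longrightarrow> vnorm m (\<lambda>i. p i - q i) > r))"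
  define N where "N = Suc (nat \<lceil>(2 * R / r + 1)^m\<rceil>)"
  have bnd: "card P < N" if "Sep P" for P
  proof -
    have "real (card P) \<le> (2 * R / r + 1)^m"
      using that r R unfolding Sep_def B_def by (intro sep_bound) auto
    then have "real (card P) \<le> real (nat \<lceil>(2 * R / r + 1)^m\<rceil>)" by linarith
    then have "card P \<le> nat \<lceil>(2 * R / r + 1)^m\<rceil>" by (simp only: of_nat_le_iff)
    then show ?thesis unfolding N_def by simp
  qed
  have "Sep {}" unfolding Sep_def by simp
  then obtain P where P: "Sep P" and maxP: "\<And>Q. Sep Q \<Longrightarrow> card Q \<le> card P"
    using ex_has_greatest_nat[of Sep "{}" card N] bnd by blast
  have cov: "\<exists>c\<in>P. vnorm m (\<lambda>i. Y i - c i) \<le> r" if Y: "Y \<in> B" for Y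
  proof (rule ccontr)
    assume "\<not> ?thesis"
    then have far: "\<forall>c\<in>P. vnorm m (\<lambda>i. Y i - c i) > r" by auto
    have YP: "Y \<notin> P"
    proof
      assume "Y \<in> P"
      then have "vnorm m (\<lambda>i. Y i - Y i) > r" using far by blast
      then show False using r by (simp add: vnorm_def)
    qed
    have "Sep (insert Y P)"
      unfolding Sep_def
    proof (intro conjI ballI impI)
      show "finite (insert Y P)" using P unfolding Sep_def by simp
      show "insert Y P \<subseteq> B" using P Y unfolding Sep_def by simp
      fix p q assume pq: "p \<in> insert Y P" "q \<in> insert Y P" "p \<noteq> q"
      show "vnorm m (\<lambda>i. p i - q i) > r"
      proof (cases "p = Y")
        case True
        then have "q \<in> P" using pq by auto
        then show ?thesis using far True by auto
      next
        case False
        then have p: "p \<in> P" using pq by auto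
        show ?thesis
        proof (cases "q = Y")
          case True
          have "vnorm m (\<lambda>i. Y i - p i) > r" using far p by blast
          then show ?thesis using vnorm_sym[of m p Y] True by simp
        next
          case False
          then show ?thesis using P p pq unfolding Sep_def by auto
        qed
      qed
    qed
    then have "card (insert Y P) \<le> card P" by (rule maxP)
    moreover have "card (insert Y P) = Suc (card P)" using P YP unfolding Sep_def by simp
    ultimately show False by simp
  qed
  have Pf: "finite P" and Ps: "P \<subseteq> B" and Psep: "\<forall>p\<in>P. \<forall>q\<in>P. p \<noteq> q \<longrightarrow> vnorm m (\<lambda>i. p i - q i) > r"
    using P unfolding Sep_def by auto
  have "real (card P) \<le> (2 * R / r + 1)^m"
    by (rule sep_bound[OF r R Pf _ Psep]) (use Ps in \<open>simp add: B_def\<close>)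
  then show ?thesis
    using Pf Ps cov unfolding B_def[symmetric] by blast
qed


lemma gron_core:
  fixes g g' :: "real \<Rightarrow> real" and K \<epsilon> a b :: real
  assumes K: "K > 0" and e: "\<epsilon> \<ge> 0" and ab: "a \<le> b"
    and dg: "\<And>y. y \<in> {a..b} \<Longrightarrow> (g has_real_derivative g' y) (at y within {a..b})"
    and gb: "\<And>y. y \<in> {a..b} \<Longrightarrow> g' y \<le> K * g y + \<epsilon>"
  shows "g b \<le> exp (K * (b - a)) * (g a + \<epsilon> / K) - \<epsilon> / K"
proof -
  define h where "h = (\<lambda>y. exp (- K * (y - a)) * (g y + \<epsilon> / K))"
  have dh: "(h has_real_derivative exp (- K * (y - a)) * (g' y - K * g y - \<epsilon>)) (at y within {a..b})"
    if y: "y \<in> {a..b}" for y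
  proof -
    have "(h has_real_derivative (exp (- K * (y - a)) * (- K * (1 - 0))) * (g y + \<epsilon> / K) + (g' y + 0) * exp (- K * (y - a))) (at y within {a..b})"
      unfolding h_def
      by (intro DERIV_mult DERIV_add dg[OF y] DERIV_const DERIV_exp[THEN DERIV_chain2] DERIV_cmult DERIV_diff DERIV_ident)
    moreover have "(exp (- K * (y - a)) * (- K * (1 - 0))) * (g y + \<epsilon> / K) + (g' y + 0) * exp (- K * (y - a))
        = exp (- K * (y - a)) * (g' y - K * g y - \<epsilon>)"
      using K by (simp add: field_simps)
    ultimately show ?thesis by simp
  qed
  have cont: "continuous_on {a..b} h"
    unfolding continuous_on_eq_continuous_within using DERIV_continuous[OF dh] by blast
  have "h b \<le> h a"
  proof (rule DERIV_nonpos_imp_decreasing_open[OF ab _ cont])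
    fix y assume y: "a < y" "y < b"
    have "(h has_real_derivative exp (- K * (y - a)) * (g' y - K * g y - \<epsilon>)) (at y)"
      using dh[of y] y by (simp add: at_within_Icc_at)
    moreover have "exp (- K * (y - a)) * (g' y - K * g y - \<epsilon>) \<le> 0"
      using gb[of y] y by (intro mult_nonneg_nonpos) auto
    ultimately show "\<exists>z. (h has_real_derivative z) (at y) \<and> z \<le> 0" by blast
  qed
  then have "exp (- K * (b - a)) * (g b + \<epsilon> / K) \<le> g a + \<epsilon> / K"
    unfolding h_def by simp
  then have "exp (K * (b - a)) * (exp (- K * (b - a)) * (g b + \<epsilon> / K)) \<le> exp (K * (b - a)) * (g a + \<epsilon> / K)"
    by (intro mult_left_mono) auto
  moreover have "exp (K * (b - a)) * exp (- K * (b - a)) = 1"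
    by (simp add: exp_add[symmetric])
  ultimately have "g b + \<epsilon> / K \<le> exp (K * (b - a)) * (g a + \<epsilon> / K)"
    by (metis mult.assoc mult_1)
  then show ?thesis by simp
qed

lemma gron_vec:
  fixes Z Z' :: "nat \<Rightarrow> real \<Rightarrow> real" and K \<epsilon> a b :: real
  assumes K: "K > 0" and e: "\<epsilon> \<ge> 0" and ab: "a \<le> b"
    and dZ: "\<And>i y. i < m \<Longrightarrow> y \<in> {a..b} \<Longrightarrow> (Z i has_real_derivative Z' i y) (at y within {a..b})"
    and bd: "\<And>y. y \<in> {a..b} \<Longrightarrow> sqrt (\<Sum>i<m. (Z' i y)^2) \<le> K * sqrt (\<Sum>i<m. (Z i y)^2) + \<epsilon>"
  shows "sqrt (\<Sum>i<m. (Z i b)^2) \<le> exp (K * (b - a)) * (sqrt (\<Sum>i<m. (Z i a)^2) + \<epsilon> / K) - \<epsilon> / K"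
proof -
  define E where "E = exp (K * (b - a))"
  have E: "E > 0" unfolding E_def by simp
  define nZ where "nZ = (\<lambda>y. sqrt (\<Sum>i<m. (Z i y)^2))"
  define nZ' where "nZ' = (\<lambda>y. sqrt (\<Sum>i<m. (Z' i y)^2))"
  have main: "nZ b \<le> E * (nZ a + \<epsilon> / K) - \<epsilon> / K + E * \<eta>" if \<eta>: "\<eta> > 0" for \<eta>
  proof -
    define S where "S = (\<lambda>y. (\<Sum>i<m. (Z i y)^2) + \<eta>^2)"
    define g where "g = (\<lambda>y. sqrt (S y))"
    define g' where "g' = (\<lambda>y. (\<Sum>i<m. Z i y * Z' i y) / g y)"
    have Spos: "S y > 0" for y unfolding S_def using \<eta> by (intro add_nonneg_pos sum_nonneg) auto
    have gpos: "g y > 0" for y unfolding g_def using Spos by simp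
    have nZg: "nZ y \<le> g y" for y
      unfolding nZ_def g_def S_def using \<eta> by (intro real_sqrt_le_mono) auto
    have dS: "(S has_real_derivative (\<Sum>i<m. 2 * Z i y * Z' i y)) (at y within {a..b})"
      if y: "y \<in> {a..b}" for y
    proof -
      have di: "((\<lambda>x. (Z i x)^2) has_real_derivative 2 * Z i y * Z' i y) (at y within {a..b})"
        if i: "i < m" for i
        using DERIV_power[OF dZ[OF i y], of 2] by (simp add: mult_ac)
      have "(S has_real_derivative (\<Sum>i<m. 2 * Z i y * Z' i y) + 0) (at y within {a..b})"
        unfolding S_def
        by (intro DERIV_add DERIV_sum DERIV_const di) auto
      then show ?thesis by simp
    qed
    have dg: "(g has_real_derivative g' y) (at y within {a..b})" if y: "y \<in> {a..b}" for y
    proof -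
      have "(g has_real_derivative inverse (sqrt (S y)) / 2 * (\<Sum>i<m. 2 * Z i y * Z' i y)) (at y within {a..b})"
        unfolding g_def by (rule DERIV_chain2[OF DERIV_real_sqrt[OF Spos] dS[OF y]])
      moreover have "inverse (sqrt (S y)) / 2 * (\<Sum>i<m. 2 * Z i y * Z' i y) = g' y"
        unfolding g'_def g_def by (simp add: sum_distrib_left sum_divide_distrib field_simps mult.assoc)
      ultimately show ?thesis by simp
    qed
    have gb: "g' y \<le> K * g y + \<epsilon>" if y: "y \<in> {a..b}" for y
    proof -
      have "(\<Sum>i<m. Z i y * Z' i y) \<le> (\<Sum>i<m. \<bar>Z i y\<bar> * \<bar>Z' i y\<bar>)"
        by (intro sum_mono) (simp add: abs_mult[symmetric])
      also have "\<dots> \<le> nZ y * nZ' y"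
        using L2_set_mult_ineq[of "\<lambda>i. Z i y" "\<lambda>i. Z' i y" "{..<m}"]
        unfolding nZ_def nZ'_def L2_set_def .
      also have "\<dots> \<le> g y * nZ' y"
        using nZg[of y] by (intro mult_right_mono) (auto simp: nZ'_def intro: sum_nonneg)
      finally have "g' y \<le> nZ' y"
        unfolding g'_def using gpos[of y] by (simp add: divide_le_eq mult.commute)
      also have "\<dots> \<le> K * nZ y + \<epsilon>" using bd[OF y] unfolding nZ_def nZ'_def .
      also have "\<dots> \<le> K * g y + \<epsilon>" using nZg[of y] K by simp
      finally show ?thesis .
    qed
    have "g b \<le> E * (g a + \<epsilon> / K) - \<epsilon> / K"
      unfolding E_def by (rule gron_core[OF K e ab dg gb])
    moreover have "g a \<le> nZ a + \<eta>"
    proof -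
      have "g a \<le> sqrt (\<Sum>i<m. (Z i a)^2) + sqrt (\<eta>^2)"
        unfolding g_def S_def by (intro sqrt_add_le_add_sqrt sum_nonneg) auto
      then show ?thesis using \<eta> unfolding nZ_def by simp
    qed
    ultimately have "g b \<le> E * (nZ a + \<epsilon> / K) - \<epsilon> / K + E * \<eta>"
      using E by (smt (verit) mult_left_mono distrib_left)
    then show ?thesis using nZg[of b] by linarith
  qed
  have "nZ b \<le> E * (nZ a + \<epsilon> / K) - \<epsilon> / K"
  proof (rule field_le_epsilon)
    fix t :: real assume t: "t > 0"
    have "nZ b \<le> E * (nZ a + \<epsilon> / K) - \<epsilon> / K + E * (t / E)"
      using main[of "t / E"] t E by simp
    then show "nZ b \<le> E * (nZ a + \<epsilon> / K) - \<epsilon> / K + t" using E by simp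
  qed
  then show ?thesis unfolding nZ_def E_def .
qed


lemma integral_exp_neg:
  fixes K x :: real assumes K: "K > 0" and x: "x \<ge> 0"
  shows "integral {0..x} (\<lambda>s. exp (- s * K)) = (1 - exp (- x * K)) / K"
proof -
  have "((\<lambda>s. exp (- s * K)) has_integral ((- exp (- x * K) / K) - (- exp (- 0 * K) / K))) {0..x}"
  proof (rule fundamental_theorem_of_calculus[OF x])
    fix s assume "s \<in> {0..x}"
    have "((\<lambda>s. - exp (- s * K) / K) has_real_derivative (- (exp (- s * K) * (- 1 * K)) / K)) (at s within {0..x})"
      using K by (intro derivative_eq_intros) auto
    then show "((\<lambda>s. - exp (- s * K) / K) has_vector_derivative exp (- s * K)) (at s within {0..x})"
      using K by (simp add: has_real_derivative_iff_has_vector_derivative[symmetric])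
  qed
  then show ?thesis using K by (simp add: integral_unique) (simp add: field_simps)
qed

definition covers :: "real \<Rightarrow> ('a \<Rightarrow> real) set \<Rightarrow> 'a set \<Rightarrow> ('a \<Rightarrow> real) set \<Rightarrow> bool" where
  "covers \<delta> T S C \<longleftrightarrow> finite C \<and> C \<subseteq> T \<and> (\<forall>t\<in>T. \<exists>c\<in>C. (SUP x\<in>S. ereal \<bar>t x - c x\<bar>) \<le> ereal \<delta>)"

lemma covnum_alt: "covnum \<delta> T S = (INF C \<in> {C. covers \<delta> T S C}. enat (card C))"
  unfolding covnum_def covers_def by simp

lemma covnum_le: "covers \<delta> T S C \<Longrightarrow> covnum \<delta> T S \<le> enat (card C)"
  unfolding covnum_alt by (rule INF_lower) simp

lemma covnum_attained:
  assumes "covnum \<delta> T S \<noteq> \<infinity>"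
  shows "\<exists>C. covers \<delta> T S C \<and> covnum \<delta> T S = enat (card C)"
proof -
  let ?A = "(\<lambda>C. enat (card C)) ` {C. covers \<delta> T S C}"
  have ne: "?A \<noteq> {}"
  proof
    assume "?A = {}"
    then have "{C. covers \<delta> T S C} = {}" by simp
    then have "covnum \<delta> T S = \<infinity>" unfolding covnum_alt by (simp add: Inf_enat_def)
    then show False using assms by simp
  qed
  have "Inf ?A \<in> ?A" unfolding Inf_enat_def using ne by (auto intro: LeastI)
  then show ?thesis unfolding covnum_alt by auto
qed

lemma covnum_ge1:
  assumes "T \<noteq> {}" shows "1 \<le> covnum \<delta> T S"
  unfolding covnum_alt
proof (rule INF_greatest)
  fix C assume "C \<in> {C. covers \<delta> T S C}"
  then have "finite C" "C \<noteq> {}" using assms unfolding covers_def by auto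
  then have "card C \<ge> 1" by (simp add: Suc_le_eq card_gt_0_iff)
  then show "1 \<le> enat (card C)" by (simp add: one_enat_def)
qed

lemma abs_le_L2:
  fixes z :: "nat \<Rightarrow> real"
  assumes "k < m" shows "\<bar>z k\<bar> \<le> sqrt (\<Sum>i<m. (z i)^2)"
proof -
  have "(z k)^2 \<le> (\<Sum>i<m. (z i)^2)" by (rule member_le_sum) (use assms in simp_all)
  then have "sqrt ((z k)^2) \<le> sqrt (\<Sum>i<m. (z i)^2)" by (rule real_sqrt_le_mono)
  then show ?thesis by simp
qed

lemma sol_close:
  fixes G :: "(real \<times> (nat \<Rightarrow> real)) set" and f f' :: "real \<times> (nat \<Rightarrow> real) \<Rightarrow> real"
  assumes m: "m \<ge> 1" and k: "k < m" and L: "L \<ge> 0" and r: "r \<ge> 0" and al: "al \<ge> 0"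
    and lip: "\<forall>x Y Y'. (x, Y) \<in> G \<longrightarrow> (x, Y') \<in> G \<longrightarrow> \<bar>f (x, Y) - f (x, Y')\<bar> \<le> L * vnorm m (\<lambda>i. Y i - Y' i)"
    and close: "\<forall>p\<in>G. \<bar>f p - f' p\<bar> \<le> r"
    and sD: "is_solution m f Y0 a0 al D" and sD': "is_solution m f' Y0' a0 al D'"
    and gD: "\<forall>x\<in>{a0..a0+al}. (x, vec_of m D x) \<in> G"
    and gD': "\<forall>x\<in>{a0..a0+al}. (x, vec_of m D' x) \<in> G"
    and Y0: "vnorm m (\<lambda>i. Y0 i - Y0' i) \<le> r"
    and x: "x \<in> {a0..a0+al}"
  shows "\<bar>D k x - D' k x\<bar> \<le> exp (sqrt (L^2 + 1) * (x - a0)) * (r + r / sqrt (L^2 + 1)) - r / sqrt (L^2 + 1)"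
proof -
  define K where "K = sqrt (L^2 + 1)"
  have K: "K > 0" unfolding K_def by (simp add: add_nonneg_pos)
  have LK: "L \<le> K" unfolding K_def using L by (metis real_sqrt_le_mono real_sqrt_abs abs_of_nonneg le_add_same_cancel1 zero_le_one)
  define Z where "Z = (\<lambda>i y. D i y - D' i y)"
  define Z' where "Z' = (\<lambda>i y. D (Suc i) y - D' (Suc i) y)"
  obtain n where n: "m = Suc n" using m by (cases m) auto
  have dZ: "(Z i has_real_derivative Z' i y) (at y within {a0..a0+al})"
    if "i < m" "y \<in> {a0..a0+al}" for i y
    unfolding Z_def Z'_def
    using sD sD' that unfolding is_solution_def by (intro DERIV_diff) auto
  have bd: "sqrt (\<Sum>i<m. (Z' i y)^2) \<le> K * sqrt (\<Sum>i<m. (Z i y)^2) + r"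
    if y: "y \<in> {a0..a0+al}" for y
  proof -
    define nz where "nz = sqrt (\<Sum>i<m. (Z i y)^2)"
    have nz0: "nz \<ge> 0" unfolding nz_def by (intro real_sqrt_ge_zero sum_nonneg) auto
    have nzsq: "nz^2 = (\<Sum>i<m. (Z i y)^2)" unfolding nz_def by (simp add: sum_nonneg)
    have s1: "(\<Sum>i<n. (Z' i y)^2) \<le> nz^2"
    proof -
      have "(\<Sum>i<n. (Z' i y)^2) = (\<Sum>i<n. (Z (Suc i) y)^2)" unfolding Z_def Z'_def by simp
      also have "\<dots> \<le> (Z 0 y)^2 + (\<Sum>i<n. (Z (Suc i) y)^2)" by simp
      also have "\<dots> = (\<Sum>i<m. (Z i y)^2)" unfolding n by (rule sum.lessThan_Suc_shift[symmetric])
      finally show ?thesis using nzsq by simp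
    qed
    have vv: "vnorm m (\<lambda>i. vec_of m D y i - vec_of m D' y i) = nz"
      unfolding vnorm_def nz_def Z_def vec_of_def by simp
    have eqm: "Z' n y = f (y, vec_of m D y) - f' (y, vec_of m D' y)"
      using sD sD' y unfolding is_solution_def Z'_def n by simp
    have "\<bar>Z' n y\<bar> \<le> \<bar>f (y, vec_of m D y) - f (y, vec_of m D' y)\<bar> + \<bar>f (y, vec_of m D' y) - f' (y, vec_of m D' y)\<bar>"
      unfolding eqm by linarith
    also have "\<dots> \<le> L * nz + r"
      using lip gD gD' y close vv by (intro add_mono) auto
    finally have w: "\<bar>Z' n y\<bar> \<le> L * nz + r" .
    have "(Z' n y)^2 \<le> (L * nz + r)^2"
      using w by (metis abs_le_square_iff abs_of_nonneg L nz0 r mult_nonneg_nonneg add_nonneg_nonneg)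
    then have "(\<Sum>i<m. (Z' i y)^2) \<le> nz^2 + (L * nz + r)^2"
      using s1 unfolding n by simp
    also have "\<dots> \<le> (K * nz + r)^2"
    proof -
      have K2: "K^2 = L^2 + 1" unfolding K_def by simp
      have "L * nz * r \<le> K * nz * r" using LK nz0 r by (intro mult_right_mono) auto
      moreover have e1: "(K*nz+r)^2 = K^2*nz^2 + 2*(K*nz*r) + r^2" by (simp add: power2_sum power_mult_distrib)
      moreover have e2: "nz^2 + (L*nz+r)^2 = (L^2+1)*nz^2 + 2*(L*nz*r) + r^2"
        by (simp add: power2_sum power_mult_distrib algebra_simps)
      ultimately show ?thesis unfolding K2 by linarith
    qed
    finally have "(\<Sum>i<m. (Z' i y)^2) \<le> (K * nz + r)^2" .
    then have "sqrt (\<Sum>i<m. (Z' i y)^2) \<le> sqrt ((K * nz + r)^2)" by (rule real_sqrt_le_mono)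
    also have "\<dots> = K * nz + r" using K nz0 r by simp
    finally show ?thesis unfolding nz_def .
  qed
  have ax: "a0 \<le> x" using x by simp
  have dZ': "\<And>i y. i < m \<Longrightarrow> y \<in> {a0..x} \<Longrightarrow> (Z i has_real_derivative Z' i y) (at y within {a0..x})"
  proof -
    fix i y assume "i < m" "y \<in> {a0..x}"
    then have "(Z i has_real_derivative Z' i y) (at y within {a0..a0+al})" using x by (intro dZ) auto
    then show "(Z i has_real_derivative Z' i y) (at y within {a0..x})"
      by (rule DERIV_subset) (use x in auto)
  qed
  have G: "sqrt (\<Sum>i<m. (Z i x)^2) \<le> exp (K * (x - a0)) * (sqrt (\<Sum>i<m. (Z i a0)^2) + r / K) - r / K"
    by (rule gron_vec[OF K r ax dZ']) (use bd x in auto)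
  have Z0: "sqrt (\<Sum>i<m. (Z i a0)^2) \<le> r"
  proof -
    have "(\<Sum>i<m. (Z i a0)^2) = (\<Sum>i<m. (Y0 i - Y0' i)^2)"
      using sD sD' unfolding is_solution_def Z_def by simp
    then show ?thesis using Y0 unfolding vnorm_def by simp
  qed
  have "\<bar>D k x - D' k x\<bar> \<le> sqrt (\<Sum>i<m. (Z i x)^2)"
    using abs_le_L2[OF k, of "\<lambda>i. Z i x"] unfolding Z_def .
  also have "\<dots> \<le> exp (K * (x - a0)) * (r + r / K) - r / K"
    using G Z0 by (smt (verit) exp_gt_zero mult_left_mono)
  finally show ?thesis unfolding K_def .
qed

theorem theorem2p1:
  fixes m :: nat and a0 a b C0 L M :: real
    and F :: "(real \<times> (nat \<Rightarrow> real) \<Rightarrow> real) set"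
  assumes m: "m \<ge> 1"
    and a0: "a0 \<ge> 0" and a: "a > 0" and b: "b > 0" and C0: "C0 > 0" and L: "L \<ge> 0" and M: "M > 0"
    and F_cont: "\<forall>f\<in>F. continuous_on (Gamma_bar m a0 a b C0) f"
    and F_bound: "\<forall>f\<in>F. \<forall>p\<in>Gamma_bar m a0 a b C0. \<bar>f p\<bar> \<le> M"
    and F_lip: "\<forall>f\<in>F. \<forall>x Y Y'. (x, Y) \<in> Gamma_bar m a0 a b C0 \<longrightarrow> (x, Y') \<in> Gamma_bar m a0 a b C0 \<longrightarrow>
                  \<bar>f (x, Y) - f (x, Y')\<bar> \<le> L * vnorm m (\<lambda>i. Y i - Y' i)"
    and exist: "\<forall>f\<in>F. \<forall>Y0. in_Rm m Y0 \<and> vnorm m Y0 \<le> C0 \<longrightarrow>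
                  (\<exists>D. is_solution m f Y0 a0 (min a (b / M)) D \<and>
                       (\<forall>x\<in>{a0..a0 + min a (b / M)}. (x, vec_of m D x) \<in> Gamma_bar m a0 a b C0))"
    and F_ne: "F \<noteq> {}"
    and F_fin: "covnum (\<delta> / Lmax L a0 (min a (b / M))) F (Gamma_bar m a0 a b C0) \<noteq> \<infinity>"
    and delta: "\<delta> > 0"
    and k: "k < m"
  shows "covnum \<delta> {D k | D f Y0. f \<in> F \<and> in_Rm m Y0 \<and> vnorm m Y0 \<le> C0 \<and>
                 is_solution m f Y0 a0 (min a (b / M)) D \<and>
                 (\<forall>x\<in>{a0..a0 + min a (b / M)}. (x, vec_of m D x) \<in> Gamma_bar m a0 a b C0)}
                {a0..a0 + min a (b / M)} \<noteq> \<infinity>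
       \<and> ln (real (the_enat (covnum \<delta> {D k | D f Y0. f \<in> F \<and> in_Rm m Y0 \<and> vnorm m Y0 \<le> C0 \<and>
                 is_solution m f Y0 a0 (min a (b / M)) D \<and>
                 (\<forall>x\<in>{a0..a0 + min a (b / M)}. (x, vec_of m D x) \<in> Gamma_bar m a0 a b C0)}
                {a0..a0 + min a (b / M)})))
         \<le> ln (real (the_enat (covnum (\<delta> / Lmax L a0 (min a (b / M))) F (Gamma_bar m a0 a b C0))))
           + real m * ln (2 * C0 * Lmax L a0 (min a (b / M)) / \<delta> + 1)"
proof -
  define al where "al = min a (b / M)"
  have al: "al > 0" using a b M by (simp add: al_def)
  define I where "I = {a0..a0+al}"
  define G where "G = Gamma_bar m a0 a b C0"
  define K where "K = sqrt (L^2 + 1)"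
  have K: "K > 0" unfolding K_def by (simp add: add_nonneg_pos)
  define LM where "LM = Lmax L a0 al"
  define \<phi> where "\<phi> = (\<lambda>x. exp (x * K) * (1 + integral {0..x} (\<lambda>s. exp (- s * K))))"
  have \<phi>eq: "\<phi> x = exp (x * K) * (1 + 1 / K) - 1 / K" if x: "x \<ge> 0" for x
  proof -
    have p: "exp (x * K) * exp (- x * K) = 1" by (simp add: exp_add[symmetric])
    have "\<phi> x = exp (x * K) * (1 + (1 - exp (- x * K)) / K)"
      unfolding \<phi>_def using integral_exp_neg[OF K x] by simp
    also have "\<dots> = exp (x * K) * (1 + 1 / K) - (exp (x * K) * exp (- x * K)) / K"
      by (simp add: algebra_simps diff_divide_distrib)
    finally show ?thesis unfolding p .
  qed
  have \<phi>mono: "\<phi> x \<le> \<phi> y" if "0 \<le> x" "x \<le> y" for x y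
  proof -
    have "exp (x * K) \<le> exp (y * K)" using that K by (simp add: mult_right_mono)
    then have "exp (x * K) * (1 + 1 / K) \<le> exp (y * K) * (1 + 1 / K)"
      using K by (intro mult_right_mono) auto
    then show ?thesis using \<phi>eq that by simp
  qed
  have LMdef: "LM = (SUP x\<in>I. \<phi> x)"
    unfolding LM_def Lmax_def \<phi>_def I_def K_def ..
  have bdd: "bdd_above (\<phi> ` I)"
  proof (rule bdd_aboveI2)
    fix x assume "x \<in> I" then show "\<phi> x \<le> \<phi> (a0 + al)"
      using a0 unfolding I_def by (intro \<phi>mono) auto
  qed
  have \<phi>le: "\<phi> x \<le> LM" if "x \<in> I" for x
    unfolding LMdef using bdd that by (rule cSUP_upper2) simp
  have LMpos: "LM > 0"
  proof -
    have "a0 \<in> I" using al unfolding I_def by simp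
    then have "\<phi> a0 \<le> LM" by (rule \<phi>le)
    moreover have "\<phi> a0 \<ge> 1"
    proof -
      have "exp (a0 * K) \<ge> 1" using a0 K by simp
      then have "exp (a0 * K) * (1 + 1 / K) \<ge> 1 * (1 + 1 / K)"
        using K by (intro mult_right_mono) auto
      then show ?thesis using \<phi>eq[OF a0] by simp
    qed
    ultimately show ?thesis by simp
  qed
  define r where "r = \<delta> / LM"
  have r: "r > 0" unfolding r_def using delta LMpos by simp
  have key: "\<bar>D k x - D' k x\<bar> \<le> \<delta>"
    if "f \<in> F" "\<forall>p\<in>G. \<bar>f p - f' p\<bar> \<le> r"
       "is_solution m f Y0 a0 al D" "is_solution m f' Y0' a0 al D'"
       "\<forall>x\<in>I. (x, vec_of m D x) \<in> G" "\<forall>x\<in>I. (x, vec_of m D' x) \<in> G"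
       "vnorm m (\<lambda>i. Y0 i - Y0' i) \<le> r" "x \<in> I"
    for f f' Y0 Y0' D D' x
  proof -
    have "\<bar>D k x - D' k x\<bar> \<le> exp (K * (x - a0)) * (r + r / K) - r / K"
      unfolding K_def
      by (rule sol_close[OF m k L less_imp_le[OF r] less_imp_le[OF al], of G f f' Y0 a0 D Y0' D'])
         (use that F_lip in \<open>auto simp: G_def I_def\<close>)
    also have "\<dots> = r * \<phi> (x - a0)"
    proof -
      have ph: "\<phi> (x - a0) = exp (K * (x - a0)) * (1 + 1 / K) - 1 / K"
        using \<phi>eq[of "x - a0"] \<open>x \<in> I\<close> unfolding I_def by (simp add: mult.commute)
      show ?thesis unfolding ph by (simp add: algebra_simps)
    qed
    also have "\<dots> \<le> r * \<phi> x"
      using \<open>x \<in> I\<close> a0 r unfolding I_def by (intro mult_left_mono \<phi>mono) auto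
    also have "\<dots> \<le> r * LM" using \<phi>le[OF \<open>x \<in> I\<close>] r by (intro mult_left_mono) auto
    also have "\<dots> = \<delta>" unfolding r_def using LMpos by simp
    finally show ?thesis .
  qed
  have rr: "\<delta> / Lmax L a0 (min a (b / M)) = r" unfolding r_def LM_def al_def ..
  obtain CF where CF: "covers r F G CF" and CFn: "covnum r F G = enat (card CF)"
    using covnum_attained[of r F G] F_fin unfolding rr G_def by blast
  have CFne: "card CF \<ge> 1"
  proof -
    have "1 \<le> covnum r F G" using covnum_ge1[OF F_ne] .
    then show ?thesis unfolding CFn by (simp add: one_enat_def)
  qed
  obtain CY where CYf: "finite CY" and CYs: "CY \<subseteq> {Y. in_Rm m Y \<and> vnorm m Y \<le> C0}"
    and CYc: "\<forall>Y\<in>{Y. in_Rm m Y \<and> vnorm m Y \<le> C0}. \<exists>c\<in>CY. vnorm m (\<lambda>i. Y i - c i) \<le> r"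
    and CYn: "real (card CY) \<le> (2 * C0 / r + 1)^m"
    using ball_cover[OF r less_imp_le[OF C0], of m] by blast
  have zero_in: "(\<lambda>_. 0) \<in> {Y. in_Rm m Y \<and> vnorm m Y \<le> C0}"
    using C0 by (simp add: in_Rm_def vnorm_def)
  have CYne: "card CY \<ge> 1"
  proof -
    have "CY \<noteq> {}" using CYc zero_in by blast
    then show ?thesis using CYf by (simp add: Suc_le_eq card_gt_0_iff)
  qed
  define sol where "sol = (\<lambda>f' Y'. SOME D. is_solution m f' Y' a0 al D \<and> (\<forall>x\<in>I. (x, vec_of m D x) \<in> G))"
  have solp: "is_solution m f' Y' a0 al (sol f' Y') \<and> (\<forall>x\<in>I. (x, vec_of m (sol f' Y') x) \<in> G)"
    if "f' \<in> F" "in_Rm m Y' \<and> vnorm m Y' \<le> C0" for f' Y'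
  proof -
    have "\<exists>D. is_solution m f' Y' a0 al D \<and> (\<forall>x\<in>I. (x, vec_of m D x) \<in> G)"
      using exist that unfolding al_def I_def G_def by blast
    then show ?thesis unfolding sol_def by (rule someI_ex)
  qed
  define T where "T = {D k | D f Y0. f \<in> F \<and> in_Rm m Y0 \<and> vnorm m Y0 \<le> C0 \<and>
                 is_solution m f Y0 a0 al D \<and> (\<forall>x\<in>I. (x, vec_of m D x) \<in> G)}"
  define Cc where "Cc = (\<lambda>(f', Y'). sol f' Y' k) ` (CF \<times> CY)"
  have CFF: "CF \<subseteq> F" and CFfin: "finite CF" using CF unfolding covers_def by auto
  have cov: "covers \<delta> T I Cc"
    unfolding covers_def
  proof (intro conjI ballI)
    show "finite Cc" unfolding Cc_def using CFfin CYf by simp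
    show "Cc \<subseteq> T"
    proof
      fix c assume "c \<in> Cc"
      then obtain f' Y' where fy: "f' \<in> CF" "Y' \<in> CY" and c: "c = sol f' Y' k" unfolding Cc_def by auto
      have "f' \<in> F" "in_Rm m Y' \<and> vnorm m Y' \<le> C0" using fy CFF CYs by auto
      then show "c \<in> T" unfolding T_def c using solp by blast
    qed
    fix t assume "t \<in> T"
    then obtain D f Y0 where t: "t = D k" and f: "f \<in> F" and Y0: "in_Rm m Y0 \<and> vnorm m Y0 \<le> C0"
      and sD: "is_solution m f Y0 a0 al D" and gD: "\<forall>x\<in>I. (x, vec_of m D x) \<in> G"
      unfolding T_def by blast
    obtain f' where f': "f' \<in> CF" and fs: "(SUP p\<in>G. ereal \<bar>f p - f' p\<bar>) \<le> ereal r"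
      using CF f unfolding covers_def by blast
    have fc: "\<forall>p\<in>G. \<bar>f p - f' p\<bar> \<le> r"
    proof
      fix p assume "p \<in> G"
      then have "ereal \<bar>f p - f' p\<bar> \<le> (SUP p\<in>G. ereal \<bar>f p - f' p\<bar>)" by (rule SUP_upper)
      then have "ereal \<bar>f p - f' p\<bar> \<le> ereal r" using fs by (rule order_trans)
      then show "\<bar>f p - f' p\<bar> \<le> r" by simp
    qed
    obtain Y' where Y': "Y' \<in> CY" and Yc: "vnorm m (\<lambda>i. Y0 i - Y' i) \<le> r"
      using CYc Y0 by blast
    have sp: "is_solution m f' Y' a0 al (sol f' Y') \<and> (\<forall>x\<in>I. (x, vec_of m (sol f' Y') x) \<in> G)"
      using solp f' Y' CFF CYs by blast
    have inC: "sol f' Y' k \<in> Cc" unfolding Cc_def using f' Y' by force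
    have "(SUP x\<in>I. ereal \<bar>t x - sol f' Y' k x\<bar>) \<le> ereal \<delta>"
    proof (rule SUP_least)
      fix x assume "x \<in> I"
      then have "\<bar>D k x - sol f' Y' k x\<bar> \<le> \<delta>"
        using key[OF f fc sD _ gD _ Yc] sp by blast
      then show "ereal \<bar>t x - sol f' Y' k x\<bar> \<le> ereal \<delta>" unfolding t by simp
    qed
    then show "\<exists>c\<in>Cc. (SUP x\<in>I. ereal \<bar>t x - c x\<bar>) \<le> ereal \<delta>" using inC by blast
  qed
  have Tne: "T \<noteq> {}"
  proof -
    obtain f where f: "f \<in> F" using F_ne by blast
    have "sol f (\<lambda>_. 0) k \<in> T" unfolding T_def using solp[OF f zero_in[simplified]] f zero_in by blast
    then show ?thesis by blast
  qed
  have cardCc: "card Cc \<le> card CF * card CY"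
  proof -
    have "card Cc \<le> card (CF \<times> CY)" unfolding Cc_def by (rule card_image_le) (use CFfin CYf in simp)
    then show ?thesis by (simp add: card_cartesian_product)
  qed
  have le1: "covnum \<delta> T I \<le> enat (card Cc)" by (rule covnum_le[OF cov])
  have ge1: "1 \<le> covnum \<delta> T I" by (rule covnum_ge1[OF Tne])
  obtain N where N: "covnum \<delta> T I = enat N" using le1 by (cases "covnum \<delta> T I") auto
  have N1: "N \<ge> 1" using ge1 N by (simp add: one_enat_def)
  have NC: "N \<le> card CF * card CY" using le1 N cardCc by simp
  have NCr: "real N \<le> real (card CF * card CY)" using NC by (simp only: of_nat_le_iff)
  have Npos: "0 < real N" using N1 by simp
  have "ln (real N) \<le> ln (real (card CF * card CY))"
    using NCr Npos by (metis ln_le_cancel_iff order_less_le_trans)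
  also have "\<dots> = ln (real (card CF)) + ln (real (card CY))"
    using CFne CYne by (simp add: ln_mult)
  also have "ln (real (card CY)) \<le> ln ((2 * C0 / r + 1)^m)"
    using CYne CYn by (subst ln_le_cancel_iff) auto
  also have "\<dots> = real m * ln (2 * C0 / r + 1)"
    using r C0 by (subst ln_realpow) (auto intro: add_nonneg_pos)
  finally have fin: "ln (real N) \<le> ln (real (card CF)) + real m * ln (2 * C0 / r + 1)" by simp
  have e2: "2 * C0 * Lmax L a0 (min a (b / M)) / \<delta> = 2 * C0 / r"
    unfolding r_def LM_def[symmetric] al_def[symmetric] using delta LMpos by simp
  have rr': "\<delta> / Lmax L a0 al = r" unfolding r_def LM_def ..
  have e2': "2 * C0 * Lmax L a0 al / \<delta> = 2 * C0 / r"
    unfolding r_def LM_def[symmetric] using delta LMpos by simp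
  show ?thesis
    unfolding rr e2 rr' e2'  al_def[symmetric] G_def[symmetric] I_def[symmetric] T_def[symmetric] N CFn
    using fin by simp
qed

end
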